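(* Let $\alpha\in\mathbb C$ and $n\ge 0$ an integer. The linear span of $P_{0,\alpha},P_{1,\alpha},\ldots,P_{n,\alpha}$ coincides with the linear span $\mathcal S_{n,\alpha}$ of $I,A_\alpha,A_\alpha^2,\ldots,A_\alpha^n$ (over the same scalar field). In particular every matrix in $\mathcal S_{n,\alpha}$ can be written as $\sum_{i=0}^n a_iP_{i,\alpha}=T(a)+\sum_{i=1}^n a_iH_{i,\alpha}$ with $a(z)=a_0+\sum_{i=1}^na_i(z^i+z^{-i})$, i.e. as a symmetric banded Toeplitz matrix plus a Hankel matrix.
   Context: All matrices are semi-infinite with rows and columns indexed by the positive integers; $I$ is the semi-infinite identity and $e_1$ its first column. $T(a)$ denotes the Toeplitz matrix with $(i,j)$ entry $a_{j-i}$ for $a(z)=\sum_{i\in\mathbb Z}a_iz^i$. For $v(z)=\sum_{i\ge1}v_iz^i$, $H(v)$ is the Hankel matrix with $(i,j)$ entry $v_{i+j-1}$. $A_\alpha:=T(z+z^{-1})+\alpha e_1e_1^T$. Let $\theta=\alpha^2-1$, $h_1(z)=\alpha z$, and $h_n(z)=\theta\sum_{i=1}^{n-1}\alpha^{n-i-1}z^i+\alpha z^n$ for $n\ge2$. Define $H_{n,\alpha}=H(h_n)$, $P_{0,\alpha}=I$ and $P_{n,\alpha}=T(z^n+z^{-n})+H_{n,\alpha}$ for $n\ge1$. *)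

theory Defs
  imports Complex_Main
begin

text \<open>Semi-infinite matrices. Rows/columns indexed by positive integers 1,2,...
  are represented 0-based: entry (i,j) of the paper is M (i-1) (j-1).\<close>
type_synonym cmat = "nat \<Rightarrow> nat \<Rightarrow> complex"

definition toeplitz :: "(int \<Rightarrow> complex) \<Rightarrow> cmat" where
  "toeplitz a = (\<lambda>i j. a (int j - int i))"

text \<open>Hankel matrix H(v), v(z) = sum_{i>=1} v_i z^i: 1-based (i,j) entry v_{i+j-1},
  i.e. 0-based entry v_{i+j+1}.\<close>
definition hankel :: "(nat \<Rightarrow> complex) \<Rightarrow> cmat" where
  "hankel v = (\<lambda>i j. v (i + j + 1))"

definition idm :: cmat where
  "idm = (\<lambda>i j. if i = j then 1 else 0)"

definition madd :: "cmat \<Rightarrow> cmat \<Rightarrow> cmat" where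
  "madd A B = (\<lambda>i j. A i j + B i j)"

text \<open>Matrix product of semi-infinite matrices (sums are finite for banded matrices).\<close>
definition mmul :: "cmat \<Rightarrow> cmat \<Rightarrow> cmat" where
  "mmul A B = (\<lambda>i j. (\<Sum>k. A i k * B k j))"

fun mpow :: "cmat \<Rightarrow> nat \<Rightarrow> cmat" where
  "mpow A 0 = idm"
| "mpow A (Suc k) = mmul A (mpow A k)"

definition zsym :: "nat \<Rightarrow> int \<Rightarrow> complex" where
  "zsym n = (\<lambda>k. (if k = int n then 1 else 0) + (if k = - int n then 1 else 0))"

definition A_mat :: "complex \<Rightarrow> cmat" where
  "A_mat \<alpha> = madd (toeplitz (zsym 1)) (\<lambda>i j. if i = 0 \<and> j = 0 then \<alpha> else 0)"

definition h_coef :: "nat \<Rightarrow> complex \<Rightarrow> nat \<Rightarrow> complex" where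
  "h_coef n \<alpha> = (\<lambda>i. if 1 \<le> i \<and> i < n then (\<alpha>\<^sup>2 - 1) * \<alpha> ^ (n - i - 1)
                      else if i = n then \<alpha> else 0)"

definition H_mat :: "nat \<Rightarrow> complex \<Rightarrow> cmat" where
  "H_mat n \<alpha> = hankel (h_coef n \<alpha>)"

definition P_mat :: "nat \<Rightarrow> complex \<Rightarrow> cmat" where
  "P_mat n \<alpha> = (if n = 0 then idm else madd (toeplitz (zsym n)) (H_mat n \<alpha>))"

definition span_fam :: "(nat \<Rightarrow> cmat) \<Rightarrow> nat \<Rightarrow> cmat set" where
  "span_fam M n = {(\<lambda>i j. \<Sum>k\<le>n. c k * M k i j) | c. True}"

text \<open>Laurent coefficients of a(z) = a_0 + sum_{i=1}^n a_i (z^i + z^{-i}).\<close>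
definition sym_symbol :: "nat \<Rightarrow> (nat \<Rightarrow> complex) \<Rightarrow> int \<Rightarrow> complex" where
  "sym_symbol n c = (\<lambda>k. if nat \<bar>k\<bar> \<le> n then c (nat \<bar>k\<bar>) else 0)"

end

theory Submission imports Defs begin

definition mulA :: "complex \<Rightarrow> cmat \<Rightarrow> cmat" where
  "mulA \<alpha> B = (\<lambda>i j. (if 0 < i then B (i-1) j else 0) + B (Suc i) j + (if i = 0 then \<alpha> * B 0 j else 0))"

lemma mmul_A: "mmul (A_mat \<alpha>) B = mulA \<alpha> B"
proof (intro ext)
  fix i j
  have eq: "(\<lambda>k. A_mat \<alpha> i k * B k j) =
    (\<lambda>k. (if k = Suc i then B k j else 0) + (if k = i - 1 then (if 0 < i then B k j else 0) else 0)
         + (if k = 0 then (if i = 0 then \<alpha> * B 0 j else 0) else 0))"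
    by (intro ext) (auto simp: A_mat_def madd_def toeplitz_def zsym_def)
  have "(\<lambda>k. A_mat \<alpha> i k * B k j) sums (B (Suc i) j + (if 0 < i then B (i-1) j else 0) + (if i = 0 then \<alpha> * B 0 j else 0))"
    unfolding eq
    by (intro sums_add sums_single[where f="\<lambda>k. B k j", of "Suc i"] sums_single) 
  then show "mmul (A_mat \<alpha>) B i j = mulA \<alpha> B i j"
    unfolding mmul_def mulA_def by (simp add: sums_unique[symmetric] algebra_simps)
qed


lemma hc_lt: "1 \<le> m \<Longrightarrow> m < n \<Longrightarrow> h_coef n \<alpha> m = (\<alpha>\<^sup>2 - 1) * \<alpha> ^ (n - m - 1)"
  by (simp add: h_coef_def)
lemma hc_eq: "h_coef n \<alpha> n = \<alpha>"
  by (simp add: h_coef_def)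
lemma hc_gt: "n < m \<Longrightarrow> h_coef n \<alpha> m = 0"
  by (simp add: h_coef_def)


lemma h2:
  assumes "1 \<le> m" "2 \<le> n"
  shows "h_coef n \<alpha> m + h_coef n \<alpha> (m+2) = h_coef (n+1) \<alpha> (m+1) + h_coef (n-1) \<alpha> (m+1)"
proof -
  consider "m + 2 < n" | "m + 2 = n" | "m+1 = n" | "m = n" | "n < m" by linarith
  then show ?thesis
  proof cases
    case 1
    define r where "r = n - m - 3"
    have e1: "n - m - 1 = r + 2" "n - (m+2) - 1 = r" "n + 1 - (m+1) - 1 = r + 2" "n - 1 - (m+1) - 1 = r"
      using 1 unfolding r_def by arith+
    have a: "h_coef n \<alpha> m = (\<alpha>\<^sup>2 - 1) * \<alpha> ^ (r+2)" using hc_lt[of m n \<alpha>] 1 assms e1(1) by simp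
    have b: "h_coef n \<alpha> (m+2) = (\<alpha>\<^sup>2 - 1) * \<alpha> ^ r" using hc_lt[of "m+2" n \<alpha>] 1 assms e1(2) by simp
    have c: "h_coef (n+1) \<alpha> (m+1) = (\<alpha>\<^sup>2 - 1) * \<alpha> ^ (r+2)" using hc_lt[of "m+1" "n+1" \<alpha>] 1 assms e1(3) by simp
    have d: "h_coef (n-1) \<alpha> (m+1) = (\<alpha>\<^sup>2 - 1) * \<alpha> ^ r" using hc_lt[of "m+1" "n-1" \<alpha>] 1 assms e1(4) by simp
    show ?thesis unfolding a b c d by simp
  next
    case 2
    have n: "n = m + 2" using 2 by simp
    have a: "h_coef (m+2) \<alpha> m = (\<alpha>\<^sup>2 - 1) * \<alpha>" using hc_lt[of m "m+2" \<alpha>] assms by simp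
    have b: "h_coef (m+2) \<alpha> (m+2) = \<alpha>" using hc_eq[of "m+2" \<alpha>] by simp
    have c: "h_coef (m+2+1) \<alpha> (m+1) = (\<alpha>\<^sup>2 - 1) * \<alpha>" using hc_lt[of "m+1" "m+2+1" \<alpha>] assms by simp
    have d: "h_coef (m+2-1) \<alpha> (m+1) = \<alpha>" using hc_eq[of "m+1" \<alpha>] by simp
    show ?thesis unfolding n a b c d by simp
  next
    case 3
    have a: "h_coef n \<alpha> m = (\<alpha>\<^sup>2 - 1)" using hc_lt[of m n \<alpha>] 3 assms by simp
    have b: "h_coef n \<alpha> (m+2) = 0" using hc_gt[of n "m+2" \<alpha>] 3 by simp
    have c: "h_coef (n+1) \<alpha> (m+1) = (\<alpha>\<^sup>2 - 1)" using hc_lt[of "m+1" "n+1" \<alpha>] 3 assms by simp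
    have d: "h_coef (n-1) \<alpha> (m+1) = 0" using hc_gt[of "n-1" "m+1" \<alpha>] 3 by simp
    show ?thesis unfolding a b c d by simp
  next
    case 4
    have a: "h_coef n \<alpha> m = \<alpha>" using hc_eq[of n \<alpha>] 4 by simp
    have b: "h_coef n \<alpha> (m+2) = 0" using hc_gt[of n "m+2" \<alpha>] 4 by simp
    have c: "h_coef (n+1) \<alpha> (m+1) = \<alpha>" using hc_eq[of "n+1" \<alpha>] 4 by simp
    have d: "h_coef (n-1) \<alpha> (m+1) = 0" using hc_gt[of "n-1" "m+1" \<alpha>] 4 assms by simp
    show ?thesis unfolding a b c d by simp
  next
    case 5
    have a: "h_coef n \<alpha> m = 0" using hc_gt[of n m \<alpha>] 5 by simp
    have b: "h_coef n \<alpha> (m+2) = 0" using hc_gt[of n "m+2" \<alpha>] 5 by simp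
    have c: "h_coef (n+1) \<alpha> (m+1) = 0" using hc_gt[of "n+1" "m+1" \<alpha>] 5 by simp
    have d: "h_coef (n-1) \<alpha> (m+1) = 0" using hc_gt[of "n-1" "m+1" \<alpha>] 5 assms by simp
    show ?thesis unfolding a b c d by simp
  qed
qed

lemma h0:
  assumes "1 \<le> m" "2 \<le> n"
  shows "h_coef n \<alpha> (m+1) + (if m = n + 1 then \<alpha> else 0) + \<alpha> * h_coef n \<alpha> m
     = (if m = n then 1 else 0) + h_coef (n+1) \<alpha> m + h_coef (n-1) \<alpha> m"
proof -
  consider "m + 1 < n" | "m + 1 = n" | "m = n" | "m = n+1" | "n+1 < m" by linarith
  then show ?thesis
  proof cases
    case 1
    define r where "r = n - m - 2"
    have e1: "n - (m+1) - 1 = r" "n - m - 1 = r + 1" "n + 1 - m - 1 = r + 2" "n - 1 - m - 1 = r"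
      using 1 unfolding r_def by arith+
    have a: "h_coef n \<alpha> (m+1) = (\<alpha>\<^sup>2 - 1) * \<alpha> ^ r" using hc_lt[of "m+1" n \<alpha>] 1 assms e1(1) by simp
    have b: "h_coef n \<alpha> m = (\<alpha>\<^sup>2 - 1) * \<alpha> ^ (r+1)" using hc_lt[of m n \<alpha>] 1 assms e1(2) by simp
    have c: "h_coef (n+1) \<alpha> m = (\<alpha>\<^sup>2 - 1) * \<alpha> ^ (r+2)" using hc_lt[of m "n+1" \<alpha>] 1 assms e1(3) by simp
    have d: "h_coef (n-1) \<alpha> m = (\<alpha>\<^sup>2 - 1) * \<alpha> ^ r" using hc_lt[of m "n-1" \<alpha>] 1 assms e1(4) by simp
    have f: "m \<noteq> n + 1" "m \<noteq> n" using 1 by auto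
    show ?thesis unfolding a b c d using f by (simp add: power_add power2_eq_square algebra_simps)
  next
    case 2
    have n: "n = m + 1" using 2 by simp
    have a: "h_coef (m+1) \<alpha> (m+1) = \<alpha>" using hc_eq[of "m+1" \<alpha>] by simp
    have b: "h_coef (m+1) \<alpha> m = (\<alpha>\<^sup>2 - 1)" using hc_lt[of m "m+1" \<alpha>] assms by simp
    have c: "h_coef (m+1+1) \<alpha> m = (\<alpha>\<^sup>2 - 1) * \<alpha>" using hc_lt[of m "m+1+1" \<alpha>] assms by simp
    have d: "h_coef (m+1-1) \<alpha> m = \<alpha>" using hc_eq[of m \<alpha>] by simp
    show ?thesis unfolding n a b c d by (simp add: power2_eq_square algebra_simps)
  next
    case 3
    have a: "h_coef n \<alpha> (m+1) = 0" using hc_gt[of n "m+1" \<alpha>] 3 by simp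
    have b: "h_coef n \<alpha> m = \<alpha>" using hc_eq[of n \<alpha>] 3 by simp
    have c: "h_coef (n+1) \<alpha> m = (\<alpha>\<^sup>2 - 1)" using hc_lt[of m "n+1" \<alpha>] 3 assms by simp
    have d: "h_coef (n-1) \<alpha> m = 0" using hc_gt[of "n-1" m \<alpha>] 3 assms by simp
    have f: "m \<noteq> n + 1" "m = n" using 3 by auto
    show ?thesis unfolding a b c d using f by (simp add: power2_eq_square algebra_simps)
  next
    case 4
    have a: "h_coef n \<alpha> (m+1) = 0" using hc_gt[of n "m+1" \<alpha>] 4 by simp
    have b: "h_coef n \<alpha> m = 0" using hc_gt[of n m \<alpha>] 4 by simp
    have c: "h_coef (n+1) \<alpha> m = \<alpha>" using hc_eq[of "n+1" \<alpha>] 4 by simp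
    have d: "h_coef (n-1) \<alpha> m = 0" using hc_gt[of "n-1" m \<alpha>] 4 assms by simp
    have f: "m = n + 1" "m \<noteq> n" using 4 by auto
    show ?thesis unfolding a b c d using f by simp
  next
    case 5
    have a: "h_coef n \<alpha> (m+1) = 0" using hc_gt[of n "m+1" \<alpha>] 5 by simp
    have b: "h_coef n \<alpha> m = 0" using hc_gt[of n m \<alpha>] 5 by simp
    have c: "h_coef (n+1) \<alpha> m = 0" using hc_gt[of "n+1" m \<alpha>] 5 by simp
    have d: "h_coef (n-1) \<alpha> m = 0" using hc_gt[of "n-1" m \<alpha>] 5 assms by simp
    have f: "m \<noteq> n + 1" "m \<noteq> n" using 5 by auto
    show ?thesis unfolding a b c d using f by simp
  qed
qed
lemma P_ent: "1 \<le> n \<Longrightarrow> P_mat n \<alpha> i j = zsym n (int j - int i) + h_coef n \<alpha> (i+j+1)"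
  by (simp add: P_mat_def madd_def toeplitz_def H_mat_def hankel_def)

lemma R2:
  assumes "2 \<le> n"
  shows "mulA \<alpha> (P_mat n \<alpha>) = madd (P_mat (n+1) \<alpha>) (P_mat (n-1) \<alpha>)"
proof (intro ext)
  fix i j
  show "mulA \<alpha> (P_mat n \<alpha>) i j = madd (P_mat (n+1) \<alpha>) (P_mat (n-1) \<alpha>) i j"
  proof (cases i)
    case 0
    have H: "h_coef n \<alpha> (j+1+1) + (if j+1 = n + 1 then \<alpha> else 0) + \<alpha> * h_coef n \<alpha> (j+1)
     = (if j+1 = n then 1 else 0) + h_coef (n+1) \<alpha> (j+1) + h_coef (n-1) \<alpha> (j+1)"
      by (rule h0) (use assms in auto)
    have Z: "zsym n (int j - 1) = (if j = n+1 then 1 else 0)" "zsym n (int j) = (if j = n then 1 else 0)"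
      "zsym (n+1) (int j) = (if j = n+1 then 1 else 0)" "zsym (n-1) (int j) = (if j+1 = n then 1 else 0)"
      using assms by (auto simp: zsym_def)
    have L: "mulA \<alpha> (P_mat n \<alpha>) 0 j = zsym n (int j - 1) + h_coef n \<alpha> (j+1+1) + \<alpha> * (zsym n (int j) + h_coef n \<alpha> (j+1))"
      using assms by (simp add: mulA_def P_ent)
    have R: "madd (P_mat (n+1) \<alpha>) (P_mat (n-1) \<alpha>) 0 j = zsym (n+1) (int j) + h_coef (n+1) \<alpha> (j+1) + (zsym (n-1) (int j) + h_coef (n-1) \<alpha> (j+1))"
      using assms by (simp add: madd_def P_ent)
    show ?thesis unfolding 0 L R Z using H by (auto simp: algebra_simps)
  next
    case (Suc k)
    have H: "h_coef n \<alpha> (k+j+1) + h_coef n \<alpha> (k+j+1+2) = h_coef (n+1) \<alpha> (k+j+1+1) + h_coef (n-1) \<alpha> (k+j+1+1)"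
      by (rule h2) (use assms in auto)
    have Z: "zsym n (int j - int k) + zsym n (int j - int (k+2)) = zsym (n+1) (int j - int (Suc k)) + zsym (n-1) (int j - int (Suc k))"
      using assms by (auto simp: zsym_def)
    have e: "Suc (Suc k) + j + 1 = k+j+1+2" "Suc k + j + 1 = k+j+1+1" by auto
    show ?thesis using assms H Z unfolding Suc mulA_def madd_def
      by (simp add: P_ent e algebra_simps)
  qed
qed

lemma R1: "mulA \<alpha> (P_mat 1 \<alpha>) = madd (P_mat 2 \<alpha>) (\<lambda>i j. 2 * idm i j)"
proof (intro ext)
  fix i j
  show "mulA \<alpha> (P_mat 1 \<alpha>) i j = madd (P_mat 2 \<alpha>) (\<lambda>i j. 2 * idm i j) i j"
    by (cases i) (auto simp: mulA_def madd_def P_ent idm_def zsym_def h_coef_def power2_eq_square algebra_simps)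
qed

lemma R0: "mulA \<alpha> idm = P_mat 1 \<alpha>"
proof (intro ext)
  fix i j
  show "mulA \<alpha> idm i j = P_mat 1 \<alpha> i j"
    by (cases i) (auto simp: mulA_def P_ent idm_def zsym_def h_coef_def)
qed


lemma span_I: "M = (\<lambda>i j. \<Sum>k\<le>n. c k * V k i j) \<Longrightarrow> M \<in> span_fam V n"
  unfolding span_fam_def by blast

lemma span_E: "M \<in> span_fam V n \<Longrightarrow> \<exists>c. M = (\<lambda>i j. \<Sum>k\<le>n. c k * V k i j)"
  unfolding span_fam_def by blast

lemma span_elem: "k \<le> n \<Longrightarrow> V k \<in> span_fam V n"
proof (rule span_I[where c="\<lambda>l. if l = k then 1 else 0"])
  assume "k \<le> n"
  show "V k = (\<lambda>i j. \<Sum>l\<le>n. (if l = k then 1 else 0) * V l i j)"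
  proof (intro ext)
    fix i j
    have "(\<Sum>l\<le>n. (if l = k then 1 else 0) * V l i j) = (\<Sum>l\<le>n. if l = k then V l i j else 0)"
      by (intro sum.cong) auto
    also have "\<dots> = V k i j" using \<open>k \<le> n\<close> by (simp add: sum.delta)
    finally show "V k i j = (\<Sum>l\<le>n. (if l = k then 1 else 0) * V l i j)" by simp
  qed
qed

lemma span_add: "A \<in> span_fam V n \<Longrightarrow> B \<in> span_fam V n \<Longrightarrow> madd A B \<in> span_fam V n"
proof -
  assume "A \<in> span_fam V n" "B \<in> span_fam V n"
  then obtain c d where A: "A = (\<lambda>i j. \<Sum>k\<le>n. c k * V k i j)" and B: "B = (\<lambda>i j. \<Sum>k\<le>n. d k * V k i j)"
    using span_E by blast
  show ?thesis
    by (rule span_I[where c="\<lambda>k. c k + d k"]) (simp add: A B madd_def sum.distrib distrib_right)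
qed

lemma span_smul: "A \<in> span_fam V n \<Longrightarrow> (\<lambda>i j. a * A i j) \<in> span_fam V n"
proof -
  assume "A \<in> span_fam V n"
  then obtain c where A: "A = (\<lambda>i j. \<Sum>k\<le>n. c k * V k i j)" using span_E by blast
  show ?thesis
    by (rule span_I[where c="\<lambda>k. a * c k"]) (simp add: A sum_distrib_left mult.assoc)
qed

lemma span_mono: "n \<le> m \<Longrightarrow> A \<in> span_fam V n \<Longrightarrow> A \<in> span_fam V m"
proof -
  assume nm: "n \<le> m" and "A \<in> span_fam V n"
  then obtain c where A: "A = (\<lambda>i j. \<Sum>k\<le>n. c k * V k i j)" using span_E by blast
  show ?thesis
  proof (rule span_I[where c="\<lambda>k. if k \<le> n then c k else 0"])
    show "A = (\<lambda>i j. \<Sum>k\<le>m. (if k \<le> n then c k else 0) * V k i j)"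
    proof (intro ext)
      fix i j
      show "A i j = (\<Sum>k\<le>m. (if k \<le> n then c k else 0) * V k i j)"
        unfolding A by (rule sum.mono_neutral_cong_left) (use nm in auto)
    qed
  qed
qed

lemma span_sum: fixes m :: nat shows "(\<And>k. k \<le> m \<Longrightarrow> M k \<in> span_fam V n) \<Longrightarrow> (\<lambda>i j. \<Sum>k\<le>m. c k * M k i j) \<in> span_fam V n"
proof (induction m)
  case 0
  then show ?case using span_smul[of "M 0" V n "c 0"] by simp
next
  case (Suc m)
  have e: "(\<lambda>i j. \<Sum>k\<le>Suc m. c k * M k i j) = madd (\<lambda>i j. \<Sum>k\<le>m. c k * M k i j) (\<lambda>i j. c (Suc m) * M (Suc m) i j)"
    by (simp add: madd_def)
  show ?case unfolding e using Suc by (intro span_add span_smul) auto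
qed

lemma span_sub: "(\<And>k. k \<le> n \<Longrightarrow> V k \<in> span_fam W n) \<Longrightarrow> span_fam V n \<subseteq> span_fam W n"
proof
  fix M assume H: "\<And>k. k \<le> n \<Longrightarrow> V k \<in> span_fam W n" and "M \<in> span_fam V n"
  then obtain c where M: "M = (\<lambda>i j. \<Sum>k\<le>n. c k * V k i j)" using span_E by blast
  show "M \<in> span_fam W n" unfolding M using H by (rule span_sum)
qed

lemma mulA_sum: fixes m :: nat shows "mulA \<alpha> (\<lambda>i j. \<Sum>k\<le>m. c k * M k i j) = (\<lambda>i j. \<Sum>k\<le>m. c k * mulA \<alpha> (M k) i j)"
  by (intro ext) (auto simp: mulA_def sum.distrib sum_distrib_left algebra_simps)

lemma G: "(\<And>j. j \<le> n \<Longrightarrow> mulA \<alpha> (V j) \<in> span_fam V (Suc n)) \<Longrightarrow> M \<in> span_fam V n \<Longrightarrow> mulA \<alpha> M \<in> span_fam V (Suc n)"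
proof -
  assume H: "\<And>j. j \<le> n \<Longrightarrow> mulA \<alpha> (V j) \<in> span_fam V (Suc n)" and "M \<in> span_fam V n"
  then obtain c where M: "M = (\<lambda>i j. \<Sum>k\<le>n. c k * V k i j)" using span_E by blast
  show ?thesis unfolding M mulA_sum using H by (rule span_sum)
qed

lemma mpow_Suc: "mpow (A_mat \<alpha>) (Suc k) = mulA \<alpha> (mpow (A_mat \<alpha>) k)"
  by (simp add: mmul_A)

lemma G_A: "M \<in> span_fam (mpow (A_mat \<alpha>)) n \<Longrightarrow> mulA \<alpha> M \<in> span_fam (mpow (A_mat \<alpha>)) (Suc n)"
proof (rule G)
  fix j assume j: "j \<le> n"
  have e: "mulA \<alpha> (mpow (A_mat \<alpha>) j) = mpow (A_mat \<alpha>) (Suc j)" by (simp add: mmul_A)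
  show "mulA \<alpha> (mpow (A_mat \<alpha>) j) \<in> span_fam (mpow (A_mat \<alpha>)) (Suc n)"
    unfolding e by (rule span_elem) (use j in simp)
qed

lemma L1: "P_mat k \<alpha> \<in> span_fam (mpow (A_mat \<alpha>)) k"
proof (induction k rule: less_induct)
  case (less k)
  show ?case
  proof (cases k)
    case 0
    then show ?thesis using span_elem[of 0 0 "mpow (A_mat \<alpha>)"] by (simp add: P_mat_def)
  next
    case (Suc m)
    show ?thesis
    proof (cases m)
      case 0
      have "P_mat 1 \<alpha> = mpow (A_mat \<alpha>) 1" by (simp add: mmul_A R0)
      then show ?thesis using Suc 0 span_elem[of 1 1 "mpow (A_mat \<alpha>)"] by simp
    next
      case (Suc l)
      have IH1: "mulA \<alpha> (P_mat m \<alpha>) \<in> span_fam (mpow (A_mat \<alpha>)) k"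
        using G_A[OF less[of m]] \<open>k = Suc m\<close> by simp
      show ?thesis
      proof (cases l)
        case 0
        have e: "P_mat k \<alpha> = madd (mulA \<alpha> (P_mat m \<alpha>)) (\<lambda>i j. (-2) * mpow (A_mat \<alpha>) 0 i j)"
        proof -
          have mk: "m = 1" "k = 2" using \<open>k = Suc m\<close> Suc 0 by simp_all
          have R: "mulA \<alpha> (P_mat m \<alpha>) = madd (P_mat k \<alpha>) (\<lambda>i j. 2 * idm i j)"
            unfolding mk by (rule R1)
          show ?thesis unfolding R madd_def by (intro ext) simp
        qed
        show ?thesis unfolding e
          by (intro span_add IH1 span_smul span_elem) simp
      next
        case (Suc l')
        have R: "mulA \<alpha> (P_mat m \<alpha>) = madd (P_mat (m+1) \<alpha>) (P_mat (m-1) \<alpha>)"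
          by (rule R2) (use \<open>m = Suc l\<close> Suc in simp)
        have e: "P_mat k \<alpha> = madd (mulA \<alpha> (P_mat m \<alpha>)) (\<lambda>i j. (-1) * P_mat l \<alpha> i j)"
        proof -
          have mk: "m + 1 = k" "m - 1 = l" using \<open>k = Suc m\<close> \<open>m = Suc l\<close> by simp_all
          show ?thesis unfolding R mk madd_def by (intro ext) simp
        qed
        have "P_mat l \<alpha> \<in> span_fam (mpow (A_mat \<alpha>)) k"
          using span_mono[OF _ less[of l]] \<open>k = Suc m\<close> \<open>m = Suc l\<close> by simp
        then show ?thesis unfolding e
          by (intro span_add IH1 span_smul)
      qed
    qed
  qed
qed

lemma L2: "mpow (A_mat \<alpha>) k \<in> span_fam (\<lambda>k. P_mat k \<alpha>) k"
proof (induction k)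
  case 0
  then show ?case using span_elem[of 0 0 "\<lambda>k. P_mat k \<alpha>"] by (simp add: P_mat_def)
next
  case (Suc k)
  have step: "mulA \<alpha> (P_mat j \<alpha>) \<in> span_fam (\<lambda>k. P_mat k \<alpha>) (Suc k)" if "j \<le> k" for j
  proof -
    consider "j = 0" | "j = 1" | "2 \<le> j" by linarith
    then show ?thesis
    proof cases
      case 1
      then show ?thesis using span_elem[of 1 "Suc k" "\<lambda>k. P_mat k \<alpha>"] by (simp add: R0 P_mat_def[of 0])
    next
      case 2
      have e: "mulA \<alpha> (P_mat j \<alpha>) = madd (P_mat 2 \<alpha>) (\<lambda>i j. 2 * P_mat 0 \<alpha> i j)"
      proof -
        have p0: "P_mat 0 \<alpha> = idm" by (simp add: P_mat_def)
        show ?thesis unfolding 2 p0 by (rule R1)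
      qed
      show ?thesis unfolding e using 2 that
        by (intro span_add span_smul) (auto intro: span_elem[where V="\<lambda>k. P_mat k \<alpha>"])
    next
      case 3
      show ?thesis unfolding R2[OF 3] using 3 that
        by (intro span_add) (auto intro: span_elem[where V="\<lambda>k. P_mat k \<alpha>"])
    qed
  qed
  show ?case unfolding mpow_Suc by (rule G[OF step Suc.IH])
qed


lemma zsym_sum: "(\<Sum>k\<in>{1..n}. c k * zsym k d) = (if 1 \<le> nat \<bar>d\<bar> \<and> nat \<bar>d\<bar> \<le> n then c (nat \<bar>d\<bar>) else 0)"
proof -
  have "(\<Sum>k\<in>{1..n}. c k * zsym k d) = (\<Sum>k\<in>{1..n}. if k = nat \<bar>d\<bar> then c k else 0)"
    by (intro sum.cong) (auto simp: zsym_def)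
  also have "\<dots> = (if 1 \<le> nat \<bar>d\<bar> \<and> nat \<bar>d\<bar> \<le> n then c (nat \<bar>d\<bar>) else 0)"
    by (simp add: sum.delta')
  finally show ?thesis .
qed

lemma part2: "(\<lambda>i j. \<Sum>k\<le>n. c k * P_mat k \<alpha> i j)
         = madd (toeplitz (sym_symbol n c)) (\<lambda>i j. \<Sum>k\<in>{1..n}. c k * H_mat k \<alpha> i j)"
proof (intro ext)
  fix i j
  define d where "d = int j - int i"
  have ins: "{..n} = insert 0 {1..n}" by auto
  have "(\<Sum>k\<le>n. c k * P_mat k \<alpha> i j) = c 0 * idm i j + (\<Sum>k\<in>{1..n}. c k * P_mat k \<alpha> i j)"
    unfolding ins by (simp add: P_mat_def)
  also have "(\<Sum>k\<in>{1..n}. c k * P_mat k \<alpha> i j) = (\<Sum>k\<in>{1..n}. c k * zsym k d) + (\<Sum>k\<in>{1..n}. c k * H_mat k \<alpha> i j)"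
    by (simp add: sum.distrib[symmetric] P_mat_def madd_def toeplitz_def d_def distrib_left)
  also have "idm i j = (if d = 0 then 1 else 0)" by (auto simp: idm_def d_def)
  also have "c 0 * (if d = 0 then 1 else 0) + ((\<Sum>k\<in>{1..n}. c k * zsym k d) + (\<Sum>k\<in>{1..n}. c k * H_mat k \<alpha> i j))
      = sym_symbol n c d + (\<Sum>k\<in>{1..n}. c k * H_mat k \<alpha> i j)"
  proof -
    have X: "c 0 * (if d = 0 then 1 else 0) + (\<Sum>k\<in>{1..n}. c k * zsym k d) = sym_symbol n c d"
      unfolding zsym_sum by (auto simp: sym_symbol_def)
    show ?thesis using X by (simp only: add.assoc[symmetric])
  qed
  finally show "(\<Sum>k\<le>n. c k * P_mat k \<alpha> i j) = madd (toeplitz (sym_symbol n c)) (\<lambda>i j. \<Sum>k\<in>{1..n}. c k * H_mat k \<alpha> i j) i j"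
    by (simp add: madd_def toeplitz_def d_def)
qed

theorem corollary5:
  fixes \<alpha> :: complex and n :: nat
  shows "span_fam (\<lambda>k. P_mat k \<alpha>) n = span_fam (\<lambda>k. mpow (A_mat \<alpha>) k) n
    \<and> (\<forall>c :: nat \<Rightarrow> complex.
         (\<lambda>i j. \<Sum>k\<le>n. c k * P_mat k \<alpha> i j)
         = madd (toeplitz (sym_symbol n c)) (\<lambda>i j. \<Sum>k\<in>{1..n}. c k * H_mat k \<alpha> i j))
    \<and> (\<forall>M \<in> span_fam (\<lambda>k. mpow (A_mat \<alpha>) k) n. \<exists>c :: nat \<Rightarrow> complex.
         M = madd (toeplitz (sym_symbol n c)) (\<lambda>i j. \<Sum>k\<in>{1..n}. c k * H_mat k \<alpha> i j))"
proof -
  have S1: "span_fam (\<lambda>k. P_mat k \<alpha>) n \<subseteq> span_fam (\<lambda>k. mpow (A_mat \<alpha>) k) n"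
  proof (rule span_sub)
    fix k assume "k \<le> n" then show "P_mat k \<alpha> \<in> span_fam (mpow (A_mat \<alpha>)) n" by (rule span_mono[OF _ L1])
  qed
  have S2: "span_fam (\<lambda>k. mpow (A_mat \<alpha>) k) n \<subseteq> span_fam (\<lambda>k. P_mat k \<alpha>) n"
  proof (rule span_sub)
    fix k assume "k \<le> n" then show "mpow (A_mat \<alpha>) k \<in> span_fam (\<lambda>k. P_mat k \<alpha>) n" by (rule span_mono[OF _ L2])
  qed
  have EQ: "span_fam (\<lambda>k. P_mat k \<alpha>) n = span_fam (\<lambda>k. mpow (A_mat \<alpha>) k) n"
    using S1 S2 by blast
  show ?thesis
  proof (intro conjI allI ballI)
    show "span_fam (\<lambda>k. P_mat k \<alpha>) n = span_fam (\<lambda>k. mpow (A_mat \<alpha>) k) n" by (rule EQ)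
  next
    fix c :: "nat \<Rightarrow> complex"
    show "(\<lambda>i j. \<Sum>k\<le>n. c k * P_mat k \<alpha> i j)
         = madd (toeplitz (sym_symbol n c)) (\<lambda>i j. \<Sum>k\<in>{1..n}. c k * H_mat k \<alpha> i j)"
      by (rule part2)
  next
    fix M assume "M \<in> span_fam (\<lambda>k. mpow (A_mat \<alpha>) k) n"
    then have "M \<in> span_fam (\<lambda>k. P_mat k \<alpha>) n" using EQ by simp
    then obtain c where Mc: "M = (\<lambda>i j. \<Sum>k\<le>n. c k * P_mat k \<alpha> i j)" using span_E by blast
    show "\<exists>c :: nat \<Rightarrow> complex. M = madd (toeplitz (sym_symbol n c)) (\<lambda>i j. \<Sum>k\<in>{1..n}. c k * H_mat k \<alpha> i j)"
      unfolding Mc part2 by blast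
  qed
qed

end
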